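(* Let $\mathbf{A}$ be a 5-dimensional LV algebra with natural basis $e_1,\dots,e_5$ such that $e_2e_4=\frac12(e_2+e_4)$, $e_2e_5=\frac12(e_2+e_5)$, and $e_ie_j\neq\frac12(e_i+e_j)$ for all other pairs of distinct indices $i,j$. Then $\mathrm{Der}(\mathbf{A})=\{0\}$.
   Context: Let $\mathbb{F}$ be a field of characteristic different from $2$. A Lotka–Volterra (LV) algebra of dimension $5$ over $\mathbb{F}$ is a commutative (not necessarily associative) $\mathbb{F}$-algebra $\mathbf{A}$ with a basis $e_1,\dots,e_5$ (the natural basis) such that $e_ie_j=\alpha_{ij}e_i+\alpha_{ji}e_j$ with $\alpha_{ij}\in\mathbb{F}$, $\alpha_{ii}=\frac12$ and $\alpha_{ij}+\alpha_{ji}=1$ for all $i,j$. A derivation is a linear map $D:\mathbf{A}\to\mathbf{A}$ with $D(uv)=D(u)v+uD(v)$ for all $u,v$; $\mathrm{Der}(\mathbf{A})$ is the set of derivations. *)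

theory Defs
  imports "HOL-Analysis.Analysis" "HOL-Library.Numeral_Type"
begin

text \<open>A 5-dimensional algebra with underlying space 'a^5 and natural basis
  e_i = axis i 1 (indices in the type 5; the numeral 5 of type 5 denotes the fifth index).
  Its structure is given by coefficients alpha with e_i e_j = alpha i j e_i + alpha j i e_j,
  extended bilinearly.\<close>

definition lv_basis :: "5 \<Rightarrow> ('a::field)^5" where
  "lv_basis i = axis i 1"

definition lv_mult :: "(5 \<Rightarrow> 5 \<Rightarrow> 'a::field) \<Rightarrow> 'a^5 \<Rightarrow> 'a^5 \<Rightarrow> 'a^5" where
  "lv_mult \<alpha> u v =
     (\<Sum>i\<in>UNIV. \<Sum>j\<in>UNIV. (u$i * v$j) *s (\<alpha> i j *s lv_basis i + \<alpha> j i *s lv_basis j))"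

definition is_LV :: "(5 \<Rightarrow> 5 \<Rightarrow> 'a::field) \<Rightarrow> bool" where
  "is_LV \<alpha> \<longleftrightarrow> (\<forall>i. \<alpha> i i = 1/2) \<and> (\<forall>i j. \<alpha> i j + \<alpha> j i = 1)"

definition is_derivation :: "(5 \<Rightarrow> 5 \<Rightarrow> 'a::field) \<Rightarrow> ('a^5 \<Rightarrow> 'a^5) \<Rightarrow> bool" where
  "is_derivation \<alpha> D \<longleftrightarrow>
     (\<forall>u v. D (u + v) = D u + D v) \<and> (\<forall>c u. D (c *s u) = c *s D u) \<and>
     (\<forall>u v. D (lv_mult \<alpha> u v) = lv_mult \<alpha> (D u) v + lv_mult \<alpha> u (D v))"

definition Der :: "(5 \<Rightarrow> 5 \<Rightarrow> 'a::field) \<Rightarrow> ('a^5 \<Rightarrow> 'a^5) set" where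
  "Der \<alpha> = {D. is_derivation \<alpha> D}"

end

theory Submission imports Defs begin
lemma UNIV5: "(UNIV::5 set) = {1,2,3,4,5}"
proof -
  have "card {1,2,3,4,5::5} = card (UNIV::5 set)" by simp
  thus ?thesis using card_subset_eq[of "UNIV::5 set" "{1,2,3,4,5}"] by simp
qed
lemma sum5: "(\<Sum>j\<in>UNIV. f j) = f (1::5) + f 2 + f 3 + f 4 + f 5"
  unfolding UNIV5 by (simp add: add.assoc)

lemma basis_nth: "lv_basis i $ k = (if k = i then 1 else 0)"
  by (simp add: lv_basis_def axis_def)

lemma delta_r: "(\<Sum>x\<in>UNIV. f x * (if k = x then 1 else 0)) = (f (k::5) :: 'a::field)"
proof -
  have "(\<Sum>x\<in>UNIV. f x * (if k = x then 1 else 0)) = (\<Sum>x\<in>UNIV. if k = x then f x else 0)"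
    by (intro sum.cong refl) simp
  thus ?thesis by simp
qed
lemma mult_nth: "lv_mult \<alpha> u v $ k = (\<Sum>j\<in>UNIV. \<alpha> k j * (u$k * v$j + u$j * v$k))"
proof -
  have "lv_mult \<alpha> u v $ k = (\<Sum>i\<in>UNIV. \<Sum>j\<in>UNIV. (u$i * v$j * \<alpha> i j) * (if k = i then 1 else 0)
        + (u$i * v$j * \<alpha> j i) * (if k = j then 1 else 0))"
    unfolding lv_mult_def sum_component vector_smult_component vector_add_component basis_nth
    by (simp only: distrib_left mult.assoc)
  also have "\<dots> = (\<Sum>i\<in>UNIV. \<Sum>j\<in>UNIV. (u$i * v$j * \<alpha> i j) * (if k = i then 1 else 0))
       + (\<Sum>i\<in>UNIV. \<Sum>j\<in>UNIV. (u$i * v$j * \<alpha> j i) * (if k = j then 1 else 0))"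
    by (simp only: sum.distrib)
  also have "(\<Sum>i\<in>UNIV. \<Sum>j\<in>UNIV. (u$i * v$j * \<alpha> j i) * (if k = j then 1 else 0))
      = (\<Sum>j\<in>UNIV. \<Sum>i\<in>UNIV. (u$i * v$j * \<alpha> j i) * (if k = j then 1 else 0))"
    by (rule sum.swap)
  also have "(\<Sum>i\<in>UNIV. \<Sum>j\<in>UNIV. (u$i * v$j * \<alpha> i j) * (if k = i then 1 else 0))
       + (\<Sum>j\<in>UNIV. \<Sum>i\<in>UNIV. (u$i * v$j * \<alpha> j i) * (if k = j then 1 else 0)) =
       (\<Sum>i\<in>UNIV. (\<Sum>j\<in>UNIV. u$i * v$j * \<alpha> i j) * (if k = i then 1 else 0))
       + (\<Sum>j\<in>UNIV. (\<Sum>i\<in>UNIV. u$i * v$j * \<alpha> j i) * (if k = j then 1 else 0))"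
    by (simp only: sum_distrib_right)
  also have "\<dots> = (\<Sum>j\<in>UNIV. u$k * v$j * \<alpha> k j) + (\<Sum>i\<in>UNIV. u$i * v$k * \<alpha> k i)"
    by (simp only: delta_r)
  also have "\<dots> = (\<Sum>j\<in>UNIV. \<alpha> k j * (u$k * v$j + u$j * v$k))"
    by (simp only: sum.distrib[symmetric] distrib_left mult.commute mult.left_commute)
  finally show ?thesis .
qed
lemma multL: "lv_mult \<alpha> (lv_basis i) w $ k = (if k = i then (\<Sum>j\<in>UNIV. \<alpha> k j * w$j) else 0) + \<alpha> k i * w$k"
proof -
  have "lv_mult \<alpha> (lv_basis i) w $ k = (\<Sum>j\<in>UNIV. (if k = i then \<alpha> k j * w$j else 0) + (if j = i then \<alpha> k j * w$k else 0))"
    unfolding mult_nth by (intro sum.cong refl) (simp add: basis_nth distrib_left)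
  also have "\<dots> = (\<Sum>j\<in>UNIV. (if k = i then \<alpha> k j * w$j else 0)) + (\<Sum>j\<in>UNIV. (if j = i then \<alpha> k j * w$k else 0))"
    by (rule sum.distrib)
  also have "\<dots> = (if k = i then (\<Sum>j\<in>UNIV. \<alpha> k j * w$j) else 0) + \<alpha> k i * w$k"
    by simp
  finally show ?thesis .
qed
lemma multR: "lv_mult \<alpha> w (lv_basis i) $ k = (if k = i then (\<Sum>j\<in>UNIV. \<alpha> k j * w$j) else 0) + \<alpha> k i * w$k"
proof -
  have "lv_mult \<alpha> w (lv_basis i) $ k = (\<Sum>j\<in>UNIV. (if k = i then \<alpha> k j * w$j else 0) + (if j = i then \<alpha> k j * w$k else 0))"
    unfolding mult_nth by (intro sum.cong refl) (simp add: basis_nth distrib_left mult.commute)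
  also have "\<dots> = (\<Sum>j\<in>UNIV. (if k = i then \<alpha> k j * w$j else 0)) + (\<Sum>j\<in>UNIV. (if j = i then \<alpha> k j * w$k else 0))"
    by (rule sum.distrib)
  also have "\<dots> = (if k = i then (\<Sum>j\<in>UNIV. \<alpha> k j * w$j) else 0) + \<alpha> k i * w$k"
    by simp
  finally show ?thesis .
qed
lemma sum_ind: "(\<Sum>x\<in>UNIV. f x * (if x = j then 1 else 0)) = (f (j::5) :: 'a::field)"
proof -
  have "(\<Sum>x\<in>UNIV. f x * (if x = j then 1 else 0)) = (\<Sum>x\<in>UNIV. if x = j then f x else 0)"
    by (intro sum.cong refl) simp
  thus ?thesis by simp
qed
lemma mult_basis: "lv_mult \<alpha> (lv_basis i) (lv_basis j) = \<alpha> i j *s lv_basis i + \<alpha> j i *s lv_basis j"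
  by (simp add: vec_eq_iff multL basis_nth sum_ind)

lemma D_sum:
  assumes add: "\<forall>u v. D (u + v) = D u + D v" and sc: "\<forall>c u. D (c *s u) = (c::'a::field) *s D u"
  shows "finite A \<Longrightarrow> D (\<Sum>i\<in>A. f i) = (\<Sum>i\<in>A. D (f i :: 'a^'n))"
proof (induction A rule: finite_induct)
  case empty
  have "D 0 = D (0 *s 0)" by simp
  also have "\<dots> = 0 *s D 0" using sc by blast
  finally have "D 0 = 0" by simp
  then show ?case by simp
next
  case (insert x F)
  then show ?case using add by simp
qed

lemma mult_zero_left: "lv_mult \<alpha> 0 v = 0" by (simp add: vec_eq_iff mult_nth)
lemma mult_zero_right: "lv_mult \<alpha> v 0 = 0" by (simp add: vec_eq_iff mult_nth)

lemma canc: "(a::'a::ab_group_add) + a = s + a + (s + a) \<Longrightarrow> s + s = 0"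
proof -
  assume h: "a + a = s + a + (s + a)"
  have "s + a + (s + a) = (s + s) + (a + a)" by (simp only: add.assoc add.left_commute)
  with h have "(s + s) + (a + a) = 0 + (a + a)" by simp
  thus ?thesis by (simp only: add_right_cancel)
qed
lemma two0: "(2::'a::field) \<noteq> 0 \<Longrightarrow> s + s = 0 \<Longrightarrow> s = (0::'a)"
  by (metis mult_2 mult_eq_0_iff)

theorem mainTheorem17:
  fixes \<alpha> :: "5 \<Rightarrow> 5 \<Rightarrow> 'a::field"
  assumes char: "(2::'a) \<noteq> 0"
    and LV: "is_LV \<alpha>"
    and h24: "lv_mult \<alpha> (lv_basis 2) (lv_basis 4) = (1/2) *s (lv_basis 2 + lv_basis 4)"
    and h25: "lv_mult \<alpha> (lv_basis 2) (lv_basis 5) = (1/2) *s (lv_basis 2 + lv_basis 5)"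
    and hother: "\<And>i j. i \<noteq> j \<Longrightarrow> {i, j} \<noteq> {2, 4} \<Longrightarrow> {i, j} \<noteq> {2, 5} \<Longrightarrow>
        lv_mult \<alpha> (lv_basis i) (lv_basis j) \<noteq> (1/2) *s (lv_basis i + lv_basis j)"
  shows "Der \<alpha> = {\<lambda>u. 0}"
proof
  show "{\<lambda>u. 0} \<subseteq> Der \<alpha>"
    by (simp add: Der_def is_derivation_def mult_zero_left mult_zero_right)
next
  have diag: "\<And>i. \<alpha> i i = 1/2" and sym: "\<And>i j. \<alpha> i j + \<alpha> j i = 1"
    using LV by (auto simp: is_LV_def)
  have half: "(1::'a) - 1/2 = 1/2" using char by (simp add: field_simps)
  have h2: "(1::'a)/2 + 1/2 = 1" by (metis half diff_eq_eq)
  have neq: "\<alpha> i j \<noteq> 1/2" if "i \<noteq> j" "{i, j} \<noteq> {2, 4}" "{i, j} \<noteq> {2, 5}" for i j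
  proof
    assume a: "\<alpha> i j = 1/2"
    have "\<alpha> j i = 1 - \<alpha> i j" using sym[of i j] by (simp add: algebra_simps)
    hence aji: "\<alpha> j i = 1/2" using a half by simp
    have "lv_mult \<alpha> (lv_basis i) (lv_basis j) = (1/2) *s (lv_basis i + lv_basis j)"
      by (simp only: mult_basis a aji vector_add_ldistrib)
    with hother[OF that] show False by simp
  qed
  have a24: "\<alpha> 2 4 = 1/2" using arg_cong[OF h24, of "\<lambda>v. v $ 2"] by (simp add: mult_basis basis_nth)
  have a25: "\<alpha> 2 5 = 1/2" using arg_cong[OF h25, of "\<lambda>v. v $ 2"] by (simp add: mult_basis basis_nth)
  have "\<alpha> 4 2 = 1 - \<alpha> 2 4" using sym[of 2 4] by (simp add: algebra_simps)
  hence a42: "\<alpha> 4 2 = 1/2" using a24 half by simp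
  have "\<alpha> 5 2 = 1 - \<alpha> 2 5" using sym[of 2 5] by (simp add: algebra_simps)
  hence a52: "\<alpha> 5 2 = 1/2" using a25 half by simp
  show "Der \<alpha> \<subseteq> {\<lambda>u. 0}"
  proof
    fix D assume "D \<in> Der \<alpha>"
    hence add: "\<forall>u v. D (u + v) = D u + D v" and sc: "\<forall>c u. D (c *s u) = c *s D u"
      and der: "\<And>u v. D (lv_mult \<alpha> u v) = lv_mult \<alpha> (D u) v + lv_mult \<alpha> u (D v)"
      by (auto simp: Der_def is_derivation_def)
    define x where "x i k = D (lv_basis i) $ k" for i k
    have pair: "\<alpha> i j * x i k + \<alpha> j i * x j k =
       (if k = j then (\<Sum>m\<in>UNIV. \<alpha> k m * x i m) else 0) + \<alpha> k j * x i k
       + ((if k = i then (\<Sum>m\<in>UNIV. \<alpha> k m * x j m) else 0) + \<alpha> k i * x j k)" for i j k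
    proof -
      have "D (lv_mult \<alpha> (lv_basis i) (lv_basis j)) = \<alpha> i j *s D (lv_basis i) + \<alpha> j i *s D (lv_basis j)"
        using add sc by (simp add: mult_basis)
      hence "\<alpha> i j *s D (lv_basis i) + \<alpha> j i *s D (lv_basis j) =
          lv_mult \<alpha> (D (lv_basis i)) (lv_basis j) + lv_mult \<alpha> (lv_basis i) (D (lv_basis j))"
        using der by simp
      from arg_cong[OF this, of "\<lambda>v. v $ k"] show ?thesis
        by (simp add: multL multR x_def)
    qed
    have zero: "x i k = 0" if "k \<noteq> i" "\<alpha> k i \<noteq> 1/2" for i k
    proof -
      have "\<alpha> i i * x i k + \<alpha> i i * x i k = \<alpha> k i * x i k + \<alpha> k i * x i k"
        using pair[of i i k] that(1) by simp
      hence "(1/2 + 1/2) * x i k = (\<alpha> k i + \<alpha> k i) * x i k" by (simp only: diag distrib_right)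
      hence "x i k = (\<alpha> k i + \<alpha> k i) * x i k" using h2 by simp
      hence "x i k * (1 - (\<alpha> k i + \<alpha> k i)) = 0" by (simp add: algebra_simps)
      moreover have "1 - (\<alpha> k i + \<alpha> k i) \<noteq> 0"
      proof
        assume "1 - (\<alpha> k i + \<alpha> k i) = 0"
        hence "1 = \<alpha> k i + \<alpha> k i" by (simp only: right_minus_eq)
        hence "\<alpha> k i + \<alpha> k i = 1/2 + 1/2" using h2 by simp
        hence "2 * \<alpha> k i = 2 * (1/2)" by (simp only: mult_2)
        hence "\<alpha> k i = 1/2" using char by (simp only: mult_cancel_left) simp
        with that show False by simp
      qed
      ultimately show ?thesis by (simp only: mult_eq_0_iff) simp
    qed
    have S: "(\<Sum>m\<in>UNIV. \<alpha> i m * x i m) = 0" for i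
    proof -
      have "\<alpha> i i * x i i + \<alpha> i i * x i i = (\<Sum>m\<in>UNIV. \<alpha> i m * x i m) + \<alpha> i i * x i i
           + ((\<Sum>m\<in>UNIV. \<alpha> i m * x i m) + \<alpha> i i * x i i)"
        using pair[of i i i] by simp
      hence "(\<Sum>m\<in>UNIV. \<alpha> i m * x i m) + (\<Sum>m\<in>UNIV. \<alpha> i m * x i m) = 0" by (rule canc)
      thus ?thesis using char by (rule two0[rotated])
    qed
    have z: "x i k = 0" if "k \<noteq> i" "{k, i} \<noteq> {2, 4}" "{k, i} \<noteq> {2, 5}" for i k
      using zero[OF that(1) neq[OF that]] .
    have n45a: "\<alpha> 4 5 \<noteq> 1/2" by (rule neq) (simp_all add: doubleton_eq_iff)
    have n45b: "\<alpha> 5 4 \<noteq> 1/2" by (rule neq) (simp_all add: doubleton_eq_iff)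
    note n45 = n45a n45b
    have z12: "x 1 2 = 0" by (rule z) (simp_all add: doubleton_eq_iff)
    have z13: "x 1 3 = 0" by (rule z) (simp_all add: doubleton_eq_iff)
    have z14: "x 1 4 = 0" by (rule z) (simp_all add: doubleton_eq_iff)
    have z15: "x 1 5 = 0" by (rule z) (simp_all add: doubleton_eq_iff)
    have z31: "x 3 1 = 0" by (rule z) (simp_all add: doubleton_eq_iff)
    have z32: "x 3 2 = 0" by (rule z) (simp_all add: doubleton_eq_iff)
    have z34: "x 3 4 = 0" by (rule z) (simp_all add: doubleton_eq_iff)
    have z35: "x 3 5 = 0" by (rule z) (simp_all add: doubleton_eq_iff)
    have z41: "x 4 1 = 0" by (rule z) (simp_all add: doubleton_eq_iff)
    have z43: "x 4 3 = 0" by (rule z) (simp_all add: doubleton_eq_iff)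
    have z45: "x 4 5 = 0" by (rule z) (simp_all add: doubleton_eq_iff)
    have z51: "x 5 1 = 0" by (rule z) (simp_all add: doubleton_eq_iff)
    have z53: "x 5 3 = 0" by (rule z) (simp_all add: doubleton_eq_iff)
    have z54: "x 5 4 = 0" by (rule z) (simp_all add: doubleton_eq_iff)
    have z21: "x 2 1 = 0" by (rule z) (simp_all add: doubleton_eq_iff)
    have z23: "x 2 3 = 0" by (rule z) (simp_all add: doubleton_eq_iff)
    note zs = z12 z13 z14 z15 z31 z32 z34 z35 z41 z43 z45 z51 z53 z54 z21 z23
    have x11: "x 1 1 = 0" using S[of 1] char by (simp add: sum5 zs diag)
    have x33: "x 3 3 = 0" using S[of 3] char by (simp add: sum5 zs diag)
    have "x 4 2 + x 4 4 = 0" using S[of 4] char by (simp add: sum5 zs diag a42 field_simps)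
    hence x44: "x 4 4 = - x 4 2" by (simp add: eq_neg_iff_add_eq_0 add.commute)
    have "x 5 2 + x 5 5 = 0" using S[of 5] char by (simp add: sum5 zs diag a52 field_simps)
    hence x55: "x 5 5 = - x 5 2" by (simp add: eq_neg_iff_add_eq_0 add.commute)
    have "x 2 2 + (x 2 4 + x 2 5) = 0" using S[of 2] char by (simp add: sum5 zs diag a24 a25 field_simps)
    hence x22: "x 2 2 = - (x 2 4 + x 2 5)" by (simp only: eq_neg_iff_add_eq_0)
    have "x 5 2 * (\<alpha> 4 2 - \<alpha> 4 5) = 0" using pair[of 4 5 4]
      by (auto simp add: sum5 zs x55 algebra_simps)
    hence "x 5 2 = 0 \<or> \<alpha> 4 2 = \<alpha> 4 5" by (simp only: mult_eq_0_iff right_minus_eq)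
    hence x52: "x 5 2 = 0" using n45 a42 by metis
    have "x 4 2 * (\<alpha> 5 2 - \<alpha> 5 4) = 0" using pair[of 4 5 5]
      by (auto simp add: sum5 zs x44 algebra_simps)
    hence "x 4 2 = 0 \<or> \<alpha> 5 2 = \<alpha> 5 4" by (simp only: mult_eq_0_iff right_minus_eq)
    hence x42: "x 4 2 = 0" using n45 a52 by metis
    have "x 2 5 * (\<alpha> 2 4 - \<alpha> 5 4) = 0" using pair[of 2 4 5]
      by (auto simp add: sum5 zs algebra_simps)
    hence "x 2 5 = 0 \<or> \<alpha> 2 4 = \<alpha> 5 4" by (simp only: mult_eq_0_iff right_minus_eq)
    hence x25: "x 2 5 = 0" using n45 a24 by metis
    have "x 2 4 * (\<alpha> 2 5 - \<alpha> 4 5) = 0" using pair[of 2 5 4]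
      by (auto simp add: sum5 zs algebra_simps)
    hence "x 2 4 = 0 \<or> \<alpha> 2 5 = \<alpha> 4 5" by (simp only: mult_eq_0_iff right_minus_eq)
    hence x24: "x 2 4 = 0" using n45 a25 by metis
    have allz: "x i k = 0" for i k
    proof -
      have "i \<in> {1,2,3,4,5}" "k \<in> {1,2,3,4,5}" by (simp_all add: UNIV5[symmetric])
      thus ?thesis using zs x11 x22 x33 x44 x55 x42 x52 x24 x25 by auto
    qed
    have De: "D (lv_basis i) = 0" for i using allz by (simp add: vec_eq_iff x_def)
    have "D = (\<lambda>u. 0)"
    proof
      fix u
      have "D u = D (\<Sum>i\<in>UNIV. u$i *s lv_basis i)"
        by (simp add: lv_basis_def basis_expansion)
      also have "\<dots> = (\<Sum>i\<in>UNIV. D (u$i *s lv_basis i))" by (rule D_sum[OF add sc]) simp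
      also have "\<dots> = 0" using sc De by simp
      finally show "D u = 0" .
    qed
    thus "D \<in> {\<lambda>u. 0}" by simp
  qed
qed

end
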